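(* Let $q\ge 2$ and $n\ge 1$ be integers and let $m=n+1$. Under uniform transmission over the $1$-insertion channel with input length $n$, $$\max_{{\boldsymbol y}\in\Sigma_q^{m}} \mathsf{H}^{\mathsf{In}}_{1\text{-}\mathsf{Ins}}({\boldsymbol y}) = \log_2 m,$$ and this maximum is attained only by channel outputs ${\boldsymbol y}$ with exactly $m$ runs.
   Context: $\Sigma_q=\{0,1,\dots,q-1\}$. For sequences ${\boldsymbol x}$ of length $\ell$ and ${\boldsymbol y}$ of length $N\ge \ell$, the embedding number $\omega_{{\boldsymbol x}}({\boldsymbol y})$ is the number of index tuples $1\le i_1<\dots<i_\ell\le N$ with $y_{i_j}=x_j$ for all $j$. The $k$-insertion channel with input length $n$ maps ${\boldsymbol x}\in\Sigma_q^n$ to ${\boldsymbol y}\in\Sigma_q^{n+k}$ with probability $\Pr\{{\boldsymbol y}\mid{\boldsymbol x}\}=\omega_{{\boldsymbol x}}({\boldsymbol y})/\big(\binom{n+k}{k}q^k\big)$ (exactly $k$ symbols are inserted, locations and values chosen uniformly). Under uniform transmission the input $X$ is uniform on $\Sigma_q^n$, and for an output ${\boldsymbol y}$ the input entropy is $\mathsf{H}^{\mathsf{In}}_{k\text{-}\mathsf{Ins}}({\boldsymbol y})=H(X\mid Y={\boldsymbol y})=-\sum_{{\boldsymbol x}}P({\boldsymbol x}\mid{\boldsymbol y})\log_2 P({\boldsymbol x}\mid{\boldsymbol y})$ with $P({\boldsymbol x}\mid {\boldsymbol y})=\Pr\{{\boldsymbol y}\mid{\boldsymbol x}\}/\sum_{{\boldsymbol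 x}'\in\Sigma_q^n}\Pr\{{\boldsymbol y}\mid{\boldsymbol x}'\}$. A run is a maximal block of identical consecutive symbols. *)

theory Defs
  imports Complex_Main
begin

definition words :: "nat \<Rightarrow> nat \<Rightarrow> nat list set" where
  "words q n = {xs. length xs = n \<and> set xs \<subseteq> {..<q}}"

text \<open>Embedding number: number of increasing index tuples (= index subsets of size |x|)
  at which y reads x.\<close>
definition embedding_number :: "nat list \<Rightarrow> nat list \<Rightarrow> nat" where
  "embedding_number x y =
     card {I. I \<subseteq> {..<length y} \<and> card I = length x \<and> nths y I = x}"

definition ins_prob :: "nat \<Rightarrow> nat \<Rightarrow> nat \<Rightarrow> nat list \<Rightarrow> nat list \<Rightarrow> real" where
  "ins_prob q n k x y =
     real (embedding_number x y) / (real ((n + k) choose k) * real q ^ k)"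

definition posterior :: "nat \<Rightarrow> nat \<Rightarrow> nat \<Rightarrow> nat list \<Rightarrow> nat list \<Rightarrow> real" where
  "posterior q n k y x =
     ins_prob q n k x y / (\<Sum>x'\<in>words q n. ins_prob q n k x' y)"

definition input_entropy :: "nat \<Rightarrow> nat \<Rightarrow> nat \<Rightarrow> nat list \<Rightarrow> real" where
  "input_entropy q n k y =
     - (\<Sum>x\<in>words q n. let p = posterior q n k y x in
          if p = 0 then 0 else p * log 2 p)"

definition num_runs :: "nat list \<Rightarrow> nat" where
  "num_runs y = length (remdups_adj y)"

end

theory Submission
  imports Defs
begin

definition del1 :: "nat list \<Rightarrow> nat \<Rightarrow> nat list" where
  "del1 y i = take i y @ drop (Suc i) y"

lemma del1_length: "i < length y \<Longrightarrow> length (del1 y i) = length y - 1"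
  by (simp add: del1_def)

lemma del1_words: "y \<in> words q m \<Longrightarrow> i < m \<Longrightarrow> del1 y i \<in> words q (m - 1)"
  unfolding words_def del1_def
  using set_take_subset[of i y] set_drop_subset[of "Suc i" y] by auto

lemma nths_del1: assumes "i < length y"
  shows "nths y ({..<length y} - {i}) = del1 y i"
proof -
  let ?A = "{..<length y} - {i}"
  have y: "y = take i y @ (y ! i # drop (Suc i) y)"
    using assms by (simp add: Cons_nth_drop_Suc)
  have "nths y ?A = nths (take i y @ (y ! i # drop (Suc i) y)) ?A"
    using y by simp
  also have "\<dots> = nths (take i y) ?A @ nths (y ! i # drop (Suc i) y) {j. j + length (take i y) \<in> ?A}"
    by (rule nths_append)
  also have "nths (take i y) ?A = take i y"
    using assms by (intro nths_all) auto
  also have "nths (y ! i # drop (Suc i) y) {j. j + length (take i y) \<in> ?A} = drop (Suc i) y"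
    using assms by (simp add: nths_Cons, intro nths_all) auto
  finally show ?thesis by (simp add: del1_def)
qed

lemma emb_del1: assumes "length y = Suc (length x)"
  shows "embedding_number x y = card {i. i < length y \<and> del1 y i = x}"
proof -
  let ?S = "{I. I \<subseteq> {..<length y} \<and> card I = length x \<and> nths y I = x}"
  let ?T = "{i. i < length y \<and> del1 y i = x}"
  have "bij_betw (\<lambda>i. {..<length y} - {i}) ?T ?S"
  proof (rule bij_betw_imageI)
    show "inj_on (\<lambda>i. {..<length y} - {i}) ?T"
      by (rule inj_onI) auto
    show "(\<lambda>i. {..<length y} - {i}) ` ?T = ?S"
    proof
      show "(\<lambda>i. {..<length y} - {i}) ` ?T \<subseteq> ?S"
      proof
        fix J assume "J \<in> (\<lambda>i. {..<length y} - {i}) ` ?T"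
        then obtain i where i: "i < length y" "del1 y i = x" and J: "J = {..<length y} - {i}" by auto
        have "card J = length x" using i J assms by simp
        moreover have "nths y J = x" using nths_del1[OF i(1)] i J by simp
        ultimately show "J \<in> ?S" using J by auto
      qed
      show "?S \<subseteq> (\<lambda>i. {..<length y} - {i}) ` ?T"
      proof
        fix I assume I: "I \<in> ?S"
        then have "card ({..<length y} - I) = 1"
          using assms card_Diff_subset[of I "{..<length y}"] finite_subset[of I "{..<length y}"] by auto
        then obtain i where i: "{..<length y} - I = {i}"
          by (auto simp: card_1_singleton_iff)
        then have iy: "i < length y" by auto
        have II: "I = {..<length y} - {i}" using I i by auto
        then have "del1 y i = x" using I iy nths_del1 by auto
        then show "I \<in> (\<lambda>i. {..<length y} - {i}) ` ?T" using II iy by auto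
      qed
    qed
  qed
  then show ?thesis unfolding embedding_number_def by (simp add: bij_betw_same_card)
qed

lemma no_adj_remdups: "(\<forall>i. Suc i < length y \<longrightarrow> y ! i \<noteq> y ! Suc i) \<Longrightarrow> remdups_adj y = y"
proof (induction y rule: remdups_adj.induct)
  case (3 x y xs)
  have "x \<noteq> y" using "3.prems" by (auto dest: spec[of _ 0])
  moreover have "\<forall>i. Suc i < length (y # xs) \<longrightarrow> (y#xs) ! i \<noteq> (y#xs) ! Suc i"
    using "3.prems" by (auto dest: spec[of _ "Suc _"])
  ultimately show ?case using "3.IH" by simp
qed auto

lemma del1_inj: assumes "\<forall>i. Suc i < length y \<longrightarrow> y ! i \<noteq> y ! Suc i"
  and "i < j" "j < length y" shows "del1 y i \<noteq> del1 y j"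
proof -
  have "del1 y i ! i = y ! Suc i" using assms by (simp add: del1_def nth_append)
  moreover have "del1 y j ! i = y ! i" using assms by (simp add: del1_def nth_append)
  ultimately show ?thesis using assms by (metis Suc_lessI le_less_trans less_imp_le_nat not_less_eq)
qed

lemma del1_adj: assumes "Suc i < length y" "y ! i = y ! Suc i" shows "del1 y i = del1 y (Suc i)"
proof -
  have "drop i y = y ! i # drop (Suc i) y" using assms(1) by (simp add: Cons_nth_drop_Suc)
  moreover have "take (Suc i) y = take i y @ [y ! i]" using assms(1) by (simp add: take_Suc_conv_app_nth)
  moreover have "drop (Suc i) y = y ! Suc i # drop (Suc (Suc i)) y" using assms(1) by (simp add: Cons_nth_drop_Suc)
  ultimately show ?thesis using assms by (simp add: del1_def)
qed


lemma finite_words: "finite (words q n)"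
proof -
  have "words q n = {xs. set xs \<subseteq> {..<q} \<and> length xs = n}" unfolding words_def by auto
  then show ?thesis using finite_lists_length_eq[of "{..<q}" n] by simp
qed

lemma entropy_formula:
  assumes y: "y \<in> words q (Suc n)" and q: "q \<ge> 1"
  shows "input_entropy q n 1 y = log 2 (real (Suc n))
     - (\<Sum>i<Suc n. log 2 (real (card {j. j \<in> {..<Suc n} \<and> del1 y j = del1 y i}))) / real (Suc n)"
proof -
  define m where "m = Suc n"
  define W where "W = words q n"
  define e where "e x = card {i. i \<in> {..<m} \<and> del1 y i = x}" for x
  define c where "c i = card {j. j \<in> {..<m} \<and> del1 y j = del1 y i}" for i
  have ly: "length y = m" using y unfolding words_def m_def by auto
  have fW: "finite W" unfolding W_def by (rule finite_words)
  have img: "del1 y ` {..<m} \<subseteq> W"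
    using del1_words[OF y] unfolding W_def m_def by auto
  have emb: "embedding_number x y = e x" if "x \<in> W" for x
  proof -
    have "length x = n" using that unfolding W_def words_def by auto
    then have "length y = Suc (length x)" using ly m_def by simp
    then show ?thesis using emb_del1 ly unfolding e_def by simp
  qed
  have sume: "(\<Sum>x\<in>W. real (e x)) = real m"
  proof -
    have "(\<Sum>x\<in>W. (\<Sum>i\<in>{i. i \<in> {..<m} \<and> del1 y i = x}. (1::real))) = (\<Sum>i\<in>{..<m}. 1)"
      by (rule sum.group[OF _ fW img]) simp
    then show ?thesis unfolding e_def by simp
  qed
  have mpos: "real m > 0" unfolding m_def by simp
  have qpos: "real q > 0" using q by simp
  have post: "posterior q n 1 y x = real (e x) / real m" if "x \<in> W" for x
  proof -
    have ip: "ins_prob q n 1 x' y = real (e x') / (real m * real q)" if "x' \<in> W" for x'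
      unfolding ins_prob_def using emb[OF that] m_def by simp
    have "(\<Sum>x'\<in>W. ins_prob q n 1 x' y) = (\<Sum>x'\<in>W. real (e x')) / (real m * real q)"
      using ip by (simp add: sum_divide_distrib)
    also have "\<dots> = 1 / real q" using sume mpos by simp
    finally have "(\<Sum>x'\<in>W. ins_prob q n 1 x' y) = 1 / real q" .
    then have "posterior q n 1 y x = (real (e x) / (real m * real q)) / (1 / real q)"
      unfolding posterior_def W_def[symmetric] using ip[OF that] by simp
    then show ?thesis using qpos mpos by simp
  qed
  have termx: "(let p = posterior q n 1 y x in if p = 0 then 0 else p * log 2 p)
      = (\<Sum>i\<in>{i. i \<in> {..<m} \<and> del1 y i = x}. (1 / real m) * log 2 (real (c i) / real m))"
    if "x \<in> W" for x
  proof (cases "e x = 0")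
    case True
    then have "{i. i \<in> {..<m} \<and> del1 y i = x} = {}" unfolding e_def by auto
    then show ?thesis using post[OF that] True by (simp only:) simp
  next
    case False
    have "(\<Sum>i\<in>{i. i \<in> {..<m} \<and> del1 y i = x}. (1 / real m) * log 2 (real (c i) / real m))
        = (\<Sum>i\<in>{i. i \<in> {..<m} \<and> del1 y i = x}. (1 / real m) * log 2 (real (e x) / real m))"
      by (rule sum.cong) (auto simp: c_def e_def)
    also have "\<dots> = real (e x) * ((1 / real m) * log 2 (real (e x) / real m))"
      unfolding e_def by simp
    finally show ?thesis using post[OF that] False mpos by (simp add: Let_def)
  qed
  have "input_entropy q n 1 y = - (\<Sum>x\<in>W. (\<Sum>i\<in>{i. i \<in> {..<m} \<and> del1 y i = x}. (1 / real m) * log 2 (real (c i) / real m)))"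
    unfolding input_entropy_def W_def[symmetric] using termx by (simp cong: sum.cong)
  also have "\<dots> = - (\<Sum>i\<in>{..<m}. (1 / real m) * log 2 (real (c i) / real m))"
    by (subst sum.group[OF _ fW img]) simp_all
  also have "\<dots> = - (\<Sum>i\<in>{..<m}. (1 / real m) * (log 2 (real (c i)) - log 2 (real m)))"
  proof -
    have "c i > 0" if "i < m" for i
      unfolding c_def using that by (subst card_gt_0_iff) auto
    then show ?thesis using mpos by (intro arg_cong[where f=uminus] sum.cong refl) (simp add: log_divide)
  qed
  also have "\<dots> = log 2 (real m) - (\<Sum>i\<in>{..<m}. log 2 (real (c i))) / real m"
    using mpos by (simp add: sum_subtractf sum_divide_distrib[symmetric] right_diff_distrib)
  finally show ?thesis unfolding m_def c_def .
qed


theorem theorem7: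
  fixes q n m :: nat
  assumes "q \<ge> 2" and "n \<ge> 1" and "m = n + 1"
  shows "Max (input_entropy q n 1 ` words q m) = log 2 (real m)
    \<and> (\<forall>y\<in>words q m. input_entropy q n 1 y = Max (input_entropy q n 1 ` words q m)
          \<longrightarrow> num_runs y = m)"
proof -
  define c where "c y i = card {j. j \<in> {..<Suc n} \<and> del1 y j = del1 y i}" for y i
  define L where "L y = (\<Sum>i<Suc n. log 2 (real (c y i)))" for y
  have mS: "m = Suc n" using assms by simp
  have Hf: "input_entropy q n 1 y = log 2 (real m) - L y / real m" if "y \<in> words q m" for y
  proof -
    have yw: "y \<in> words q (Suc n)" using that mS by simp
    have q1: "q \<ge> 1" using assms(1) by simp
    show ?thesis unfolding L_def c_def mS by (rule entropy_formula[OF yw q1])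
  qed
  have cpos: "c y i \<ge> 1" if "i < Suc n" for y i
  proof -
    have ne: "{j. j \<in> {..<Suc n} \<and> del1 y j = del1 y i} \<noteq> {}" using that by blast
    have fi: "finite {j. j \<in> {..<Suc n} \<and> del1 y j = del1 y i}" by simp
    have "card {j. j \<in> {..<Suc n} \<and> del1 y j = del1 y i} > 0" using ne fi card_gt_0_iff by blast
    then show ?thesis unfolding c_def by linarith
  qed
  have Lnn: "\<forall>i\<in>{..<Suc n}. log 2 (real (c y i)) \<ge> 0" for y
  proof
    fix i assume "i \<in> {..<Suc n}"
    then have "real (c y i) \<ge> 1" using cpos by simp
    then show "log 2 (real (c y i)) \<ge> 0" by simp
  qed
  have L0: "L y \<ge> 0" for y unfolding L_def using Lnn[of y] by (intro sum_nonneg) blast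
  have mpos: "real m > 0" using mS by simp
  have le: "input_entropy q n 1 y \<le> log 2 (real m)" if "y \<in> words q m" for y
    using Hf[OF that] L0[of y] mpos by simp
  define y0 where "y0 = map (\<lambda>i. i mod 2) [0..<m]"
  have y0w: "y0 \<in> words q m" unfolding y0_def words_def using assms(1) by auto
  have y0adj: "\<forall>i. Suc i < length y0 \<longrightarrow> y0 ! i \<noteq> y0 ! Suc i"
    unfolding y0_def by (auto simp: mod_Suc)
  have ly0: "length y0 = Suc n" unfolding y0_def mS by simp
  have "c y0 i = 1" if "i < Suc n" for i
  proof -
    have "{j. j \<in> {..<Suc n} \<and> del1 y0 j = del1 y0 i} = {i}"
    proof (auto simp: that)
      fix j assume "j < Suc n" "del1 y0 j = del1 y0 i"
      then show "j = i" using del1_inj[OF y0adj, of i j] del1_inj[OF y0adj, of j i] that ly0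
        by (metis linorder_neqE_nat)
    qed
    then show ?thesis unfolding c_def by simp
  qed
  then have "L y0 = 0" unfolding L_def by simp
  then have Hy0: "input_entropy q n 1 y0 = log 2 (real m)" using Hf[OF y0w] by simp
  have fin: "finite (input_entropy q n 1 ` words q m)" using finite_words by simp
  have Mx: "Max (input_entropy q n 1 ` words q m) = log 2 (real m)"
    by (rule Max_eqI[OF fin]) (use le image_eqI[where f="input_entropy q n 1", OF Hy0[symmetric] y0w] in auto)
  have runs: "num_runs y = m" if y: "y \<in> words q m" and H: "input_entropy q n 1 y = log 2 (real m)" for y
  proof (rule ccontr)
    assume nr: "num_runs y \<noteq> m"
    have ly: "length y = m" using y unfolding words_def by simp
    have "\<not> (\<forall>i. Suc i < length y \<longrightarrow> y ! i \<noteq> y ! Suc i)"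
    proof
      assume "\<forall>i. Suc i < length y \<longrightarrow> y ! i \<noteq> y ! Suc i"
      then have "remdups_adj y = y" by (rule no_adj_remdups)
      then show False using nr ly unfolding num_runs_def by simp
    qed
    then obtain i where i: "Suc i < length y" "y ! i = y ! Suc i" by auto
    have "L y = 0" using Hf[OF y] H mpos by simp
    then have z: "(\<Sum>i\<in>{..<Suc n}. log 2 (real (c y i))) = 0" unfolding L_def .
    have iS: "i \<in> {..<Suc n}" using i ly mS by simp
    have "log 2 (real (c y i)) = 0"
      using sum_nonneg_eq_0_iff[of "{..<Suc n}" "\<lambda>i. log 2 (real (c y i))"] z Lnn[of y] iS
      by simp
    moreover have "real (c y i) > 0" using cpos[of i y] iS by simp
    ultimately have "real (c y i) = 1" using powr_log_cancel[of 2 "real (c y i)"] by simp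
    then have ci: "c y i = 1" by simp
    have Si: "Suc i \<in> {..<Suc n}" using i ly mS by simp
    have "{i, Suc i} \<subseteq> {j. j \<in> {..<Suc n} \<and> del1 y j = del1 y i}"
      using iS Si del1_adj[OF i] by simp
    then have "card {i, Suc i} \<le> c y i" unfolding c_def by (intro card_mono) simp_all
    then show False using ci by simp
  qed
  show ?thesis using Mx runs by auto
qed

end
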